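(* Let $F:\mathbb{R}^d\to\mathbb{R}^d$ be smooth and consider $\dot{x}=F(x)$. For a time step $h_n>0$, the scheme $$x_{n+1}=x_n+\big(e^{h_nF'(x_n)}-1\big)\big(F'(x_n)\big)^{-1}F(x_n),$$ which is the scheme $x_{n+1}=x_n+\delta(\bar x,h_n)F(x_n)$ with $\delta(\bar x,h)=\big(e^{hF'(\bar x)}-1\big)\big(F'(\bar x)\big)^{-1}$ and $\bar x=x_n$, is locally exact: for every $n$ it is locally exact at $\bar x=x_n$.
   Context: $F'(x)$ denotes the Jacobian matrix of $F$. Throughout, $F'(\bar x)$ is assumed invertible at the points $\bar x$ considered, and $1$ denotes the identity matrix. The linearization of $\dot{x}=F(x)$ around $\bar x$ is $\dot\xi=F'(\bar x)\xi+F(\bar x)$ with $\xi=x-\bar x$. Its exact discretization with step $h_n$ is $$\xi_{n+1}=e^{h_nF'(\bar x)}\xi_n+\big(e^{h_nF'(\bar x)}-1\big)F'(\bar x)^{-1}F(\bar x).$$ Consider a scheme $x_{n+1}-x_n=\delta(\bar x,h_n)\,\Psi(x_n,x_{n+1})$ in which the matrix $\delta$ depends only on $\bar x$ and $h_n$. Its linearization at $\bar x$ is obtained as follows: - substitute $x_n=\bar x+\xi_n$ and $x_{n+1}=\bar x+\xi_{n+1}$; - keep $\delta(\bar x,h_n)$ fixed; - retain only terms up to first order in $\xi_n,\xi_{n+1}$. The scheme is locally exact at $\bar x$ if this linear relation coincides with the exact discretization above. It is locally exact if there is a sequence $\bar x_n$ with $\bar x_n-x_n=O(h_n)$ such that,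 for every $n$, the scheme is locally exact at $\bar x_n$. *)

theory Defs
  imports "HOL-Analysis.Analysis"
begin

fun matpow :: "real^'n^'n \<Rightarrow> nat \<Rightarrow> real^'n^'n" where
  "matpow A 0 = mat 1"
| "matpow A (Suc k) = A ** matpow A k"

definition mat_exp :: "real^'n^'n \<Rightarrow> real^'n^'n" where
  "mat_exp A = (\<Sum>k. (1 / fact k) *\<^sub>R matpow A k)"

text \<open>Exact discretization (step h) of the linearization of x' = F(x) around xb,
  where J xb is the Jacobian F'(xb):
  xi_{n+1} = e^{h J} xi_n + (e^{h J} - 1) J^{-1} F(xb).\<close>

definition exact_step ::
  "(real^'n \<Rightarrow> real^'n) \<Rightarrow> (real^'n \<Rightarrow> real^'n^'n) \<Rightarrow> real^'n \<Rightarrow> real \<Rightarrow> real^'n \<Rightarrow> real^'n" where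
  "exact_step F J xb h \<xi> =
     mat_exp (h *\<^sub>R J xb) *v \<xi> + (mat_exp (h *\<^sub>R J xb) - mat 1) *v (matrix_inv (J xb) *v F xb)"

text \<open>The scheme x_{n+1} - x_n = \<delta>(xb,h) \<Psi>(x_n,x_{n+1}) is locally exact at xb (for step h):
  its linearization at xb (substitute x_n = xb + \<xi>_n, x_{n+1} = xb + \<xi>_{n+1}, keep \<delta>(xb,h) fixed,
  keep first-order terms of \<Psi>, i.e. \<Psi>(xb,xb) + D\<Psi>(xb,xb)(\<xi>_n,\<xi>_{n+1})) defines exactly the
  same relation between \<xi>_n and \<xi>_{n+1} as the exact discretization.\<close>

definition locally_exact_at ::
  "(real^'n \<Rightarrow> real^'n) \<Rightarrow> (real^'n \<Rightarrow> real^'n^'n) \<Rightarrow> (real^'n \<Rightarrow> real \<Rightarrow> real^'n^'n)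
    \<Rightarrow> (real^'n \<Rightarrow> real^'n \<Rightarrow> real^'n) \<Rightarrow> real^'n \<Rightarrow> real \<Rightarrow> bool" where
  "locally_exact_at F J \<delta> \<Psi> xb h \<longleftrightarrow>
     (\<exists>L. ((\<lambda>p. \<Psi> (fst p) (snd p)) has_derivative L) (at (xb, xb)) \<and>
          (\<forall>\<xi>0 \<xi>1. (\<xi>1 - \<xi>0 = \<delta> xb h *v (\<Psi> xb xb + L (\<xi>0, \<xi>1)))
                   \<longleftrightarrow> \<xi>1 = exact_step F J xb h \<xi>0))"

end

theory Submission
  imports Defs
begin

lemma inv_left_aux:
  fixes A :: "real^'n^'n"
  assumes "invertible A"
  shows "matrix_inv A ** A = mat 1"
proof -
  have "\<exists>A'. A ** A' = mat 1 \<and> A' ** A = mat 1" using assms unfolding invertible_def by blast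
  then have "A ** matrix_inv A = mat 1 \<and> matrix_inv A ** A = mat 1"
    unfolding matrix_inv_def by (rule someI_ex)
  then show ?thesis by simp
qed

theorem corollary4p1:
  fixes F :: "real^'n \<Rightarrow> real^'n"
    and J :: "real^'n \<Rightarrow> real^'n^'n"
    and x :: "nat \<Rightarrow> real^'n"
    and h :: "nat \<Rightarrow> real"
  assumes jacobian: "\<forall>y. (F has_derivative (\<lambda>v. J y *v v)) (at y)"
    and invertible: "\<forall>n. invertible (J (x n))"
    and step_pos: "\<forall>n. h n > 0"
    and scheme: "\<forall>n. x (Suc n) = x n +
          ((mat_exp (h n *\<^sub>R J (x n)) - mat 1) ** matrix_inv (J (x n))) *v F (x n)"
  shows "\<forall>n. locally_exact_at F J
            (\<lambda>xb s. (mat_exp (s *\<^sub>R J xb) - mat 1) ** matrix_inv (J xb))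
            (\<lambda>u v. F u) (x n) (h n)"
proof
  fix n
  define xb where "xb = x n"
  define E where "E = mat_exp (h n *\<^sub>R J xb)"
  define Ji where "Ji = matrix_inv (J xb)"
  have inv: "Ji ** J xb = mat 1" unfolding Ji_def xb_def using invertible inv_left_aux by blast
  have der: "((\<lambda>p. F (fst p)) has_derivative (\<lambda>p. J xb *v fst p)) (at (xb, xb))"
  proof -
    have "(fst has_derivative fst) (at (xb, xb))" by (rule has_derivative_fst[OF has_derivative_ident])
    moreover have "(F has_derivative (\<lambda>v. J xb *v v)) (at (fst (xb, xb)))" using jacobian by simp
    ultimately show ?thesis by (metis (no_types) has_derivative_compose fst_conv)
  qed
  have key: "\<And>\<xi>0 \<xi>1. (\<xi>1 - \<xi>0 = ((E - mat 1) ** Ji) *v (F xb + J xb *v \<xi>0))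
        \<longleftrightarrow> \<xi>1 = E *v \<xi>0 + (E - mat 1) *v (Ji *v F xb)"
  proof -
    fix \<xi>0 \<xi>1 :: "real^'n"
    have "((E - mat 1) ** Ji) *v (F xb + J xb *v \<xi>0)
        = (E - mat 1) *v (Ji *v F xb) + (E - mat 1) *v ((Ji ** J xb) *v \<xi>0)"
      by (simp add: matrix_vector_right_distrib matrix_vector_mul_assoc[symmetric])
    also have "\<dots> = (E - mat 1) *v (Ji *v F xb) + E *v \<xi>0 - \<xi>0"
      by (simp add: inv matrix_vector_mult_diff_rdistrib)
    finally have eq: "((E - mat 1) ** Ji) *v (F xb + J xb *v \<xi>0) = (E - mat 1) *v (Ji *v F xb) + E *v \<xi>0 - \<xi>0" .
    have gen: "\<And>a b c d :: real^'n. (a - b = c + d - b) \<longleftrightarrow> a = d + c"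
      by (auto simp: algebra_simps)
    show "?thesis \<xi>0 \<xi>1" unfolding eq by (rule gen)
  qed
  show "locally_exact_at F J (\<lambda>xb s. (mat_exp (s *\<^sub>R J xb) - mat 1) ** matrix_inv (J xb))
            (\<lambda>u v. F u) (x n) (h n)"
    unfolding locally_exact_at_def exact_step_def
    apply (rule exI[of _ "\<lambda>p. J xb *v fst p"])
    using der key unfolding xb_def E_def Ji_def by simp
qed

end
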